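(* Let $b>0$ and let $f:[0,b]\to[0,\infty)$ be concave with $f(b)=0$, $f(0)>0$ and $\max_{[0,b]}f=f(0)$. Then $$\int_0^b\exp\left(-\frac{x^2+f(x)^2}{2}\right)\sqrt{1+f'(x)^2}\,dx\le\sqrt{\pi}.$$
   Context: Here $f'$ exists almost everywhere since $f$ is concave, and the integral is the (unnormalized) Gaussian length of the graph of $f$ over $[0,b]$. *)

theory Defs
  imports "HOL-Analysis.Analysis"
begin

end

theory Submission
  imports Defs "HOL-Probability.Probability"
begin


definition G0 :: "real \<Rightarrow> real" where
  "G0 u = integral {0..u} (\<lambda>s. exp (- s\<^sup>2))"

lemma G0_0: "G0 0 = 0" by (simp add: G0_def)

lemma G0_deriv:
  assumes "u > 0" shows "(G0 has_real_derivative exp (- u\<^sup>2)) (at u)"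
proof -
  have "((\<lambda>x. integral {0..x} (\<lambda>s. exp (- s\<^sup>2))) has_real_derivative exp (- u\<^sup>2)) (at u within {0..u+1})"
    by (rule integral_has_real_derivative) (use assms in \<open>auto intro!: continuous_intros\<close>)
  moreover have "at u within {0..u+1} = at u" using assms by (intro at_within_Icc_at) auto
  ultimately show ?thesis by (simp add: G0_def[abs_def])
qed

lemma G0_mono:
  assumes "0 \<le> u" "u \<le> v" shows "G0 u \<le> G0 v"
proof -
  have i: "(\<lambda>s. exp (- s\<^sup>2)) integrable_on {0..v}"
    by (intro integrable_continuous_real continuous_intros)
  have "integral {0..u} (\<lambda>s. exp (- s\<^sup>2)) + integral {u..v} (\<lambda>s. exp (- s\<^sup>2)) = integral {0..v} (\<lambda>s. exp (- s\<^sup>2))"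
    by (rule Henstock_Kurzweil_Integration.integral_combine) (use assms i in auto)
  moreover have "integral {u..v} (\<lambda>s. exp (- s\<^sup>2)) \<ge> 0"
    by (intro integral_nonneg integrable_continuous_real continuous_intros) auto
  ultimately show ?thesis by (simp add: G0_def)
qed

lemma G0_bound:
  assumes "0 \<le> u" shows "G0 u \<le> sqrt pi / 2"
proof -
  have si: "set_integrable lborel {0..u} (\<lambda>s. exp (- s\<^sup>2))"
    by (intro borel_integrable_atLeastAtMost' continuous_intros)
  have "G0 u = (LINT s : {0..u} | lborel. exp (- s\<^sup>2))"
    using set_borel_integral_eq_integral(2)[OF si] by (simp add: G0_def)
  also have "\<dots> = (\<integral>s. indicator {0..u} s * exp (- s\<^sup>2) \<partial>lborel)"
    by (simp add: set_lebesgue_integral_def)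
  also have "\<dots> \<le> (\<integral>s. indicator {0..} s * exp (- s\<^sup>2) \<partial>lborel)"
  proof (rule integral_mono)
    show "integrable lborel (\<lambda>s::real. indicator {0..u} s * exp (- s\<^sup>2) :: real)"
      using si by (simp add: set_integrable_def)
    show "integrable lborel (\<lambda>s::real. indicator {0..} s * exp (- s\<^sup>2) :: real)"
      using gaussian_moment_0 unfolding has_bochner_integral_iff by (simp add: ac_simps)
  qed (auto split: split_indicator)
  also have "\<dots> = sqrt pi / 2"
    using gaussian_moment_0 unfolding has_bochner_integral_iff by simp
  finally show ?thesis .
qed



lemma convex_slopes:
  fixes g :: "real \<Rightarrow> real"
  assumes cv: "convex_on {a..b} g" and "a \<le> x" "x < y" "y < z" "z \<le> b"
  shows "(g y - g x) / (y - x) \<le> (g z - g x) / (z - x)"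
    and "(g z - g x) / (z - x) \<le> (g z - g y) / (z - y)"
proof -
  have 1: "(g x - g y) / (x - y) \<le> (g x - g z) / (x - z)"
   and 2: "(g x - g z) / (x - z) \<le> (g y - g z) / (y - z)"
    using convex_on_slope_le[OF cv, of x z y] assms by auto
  have e1: "(g x - g y) / (x - y) = (g y - g x) / (y - x)" for x y :: real
    by (metis minus_diff_eq minus_divide_divide)
  show "(g y - g x) / (y - x) \<le> (g z - g x) / (z - x)" using 1 by (simp add: e1)
  show "(g z - g x) / (z - x) \<le> (g z - g y) / (z - y)" using 2 by (simp add: e1)
qed

lemma convex_diff_countable:
  fixes g :: "real \<Rightarrow> real"
  assumes cv: "convex_on {a..b} g"
  shows "\<exists>C. countable C \<and> (\<forall>x\<in>{a<..<b} - C. \<exists>D. (g has_real_derivative D) (at x) \<and>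
            (\<forall>t\<in>{a..<x}. (g x - g t) / (x - t) \<le> D))"
proof -
  define s where "s x y = (g y - g x) / (y - x)" for x y
  have sym: "s x y = s y x" for x y
    unfolding s_def by (metis minus_diff_eq minus_divide_divide)
  have m1: "s x y \<le> s x z" and m2: "s x z \<le> s y z" if "a \<le> x" "x < y" "y < z" "z \<le> b" for x y z
    using convex_slopes[OF cv that] unfolding s_def by auto
  define R where "R x = Inf (s x ` {x<..b})" for x
  define L where "L x = Sup ((\<lambda>t. s t x) ` {a..<x})" for x
  have bb: "bdd_below (s x ` {x<..b})" if "x \<in> {a<..<b}" for x
  proof -
    have "s a x \<le> s x u" if "u \<in> {x<..b}" for u
      using m1[of a x u] m2[of a x u] that \<open>x \<in> {a<..<b}\<close> by auto
    then show ?thesis by (intro bdd_belowI[of _ "s a x"]) auto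
  qed
  have ba: "bdd_above ((\<lambda>t. s t x) ` {a..<x})" if "x \<in> {a<..<b}" for x
  proof -
    have "s t x \<le> s x b" if "t \<in> {a..<x}" for t
      using m1[of t x b] m2[of t x b] that \<open>x \<in> {a<..<b}\<close> by auto
    then show ?thesis by (intro bdd_aboveI[of _ "s x b"]) auto
  qed
  have ne1: "s x ` {x<..b} \<noteq> {}" and ne2: "(\<lambda>t. s t x) ` {a..<x} \<noteq> {}" if "x \<in> {a<..<b}" for x
    using that by auto
  have Rle: "R x \<le> s x u" if "x \<in> {a<..<b}" "u \<in> {x<..b}" for x u
    unfolding R_def using bb[OF that(1)] that by (intro cInf_lower) auto
  have Lge: "s t x \<le> L x" if "x \<in> {a<..<b}" "t \<in> {a..<x}" for x t
    unfolding L_def using ba[OF that(1)] that by (intro cSup_upper) auto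
  have LR: "L x \<le> R x" if x: "x \<in> {a<..<b}" for x
  proof -
    have "s t x \<le> R x" if t: "t \<in> {a..<x}" for t
      unfolding R_def
    proof (rule cInf_greatest)
      show "s x ` {x<..b} \<noteq> {}" using x by auto
      fix v assume "v \<in> s x ` {x<..b}"
      then obtain u where u: "u \<in> {x<..b}" "v = s x u" by auto
      show "s t x \<le> v" using m1[of t x u] m2[of t x u] u t x by auto
    qed
    then show ?thesis unfolding L_def using x by (intro cSup_least) auto
  qed
  define C where "C = {x \<in> {a<..<b}. L x < R x}"
  have "\<forall>x\<in>C. \<exists>q\<in>\<rat>. L x < q \<and> q < R x"
    unfolding C_def using Rats_dense_in_real by blast
  then obtain q where q: "\<And>x. x \<in> C \<Longrightarrow> q x \<in> \<rat> \<and> L x < q x \<and> q x < R x" by metis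
  have qlt: "q x < q y" if "x \<in> C" "y \<in> C" "x < y" for x y
  proof -
    have "q x < R x" using q that by auto
    also have "R x \<le> s x y" using that by (intro Rle) (auto simp: C_def)
    also have "s x y \<le> L y" using that by (intro Lge) (auto simp: C_def)
    also have "L y < q y" using q that by auto
    finally show ?thesis .
  qed
  have inj: "inj_on q C"
    by (metis inj_onI linorder_neq_iff order_less_irrefl qlt)
  have "countable (q ` C)"
    by (rule countable_subset[OF _ countable_rat]) (use q in auto)
  then have cC: "countable C" using inj countable_image_inj_on by blast
  have "\<exists>D. (g has_real_derivative D) (at x) \<and> (\<forall>t\<in>{a..<x}. (g x - g t) / (x - t) \<le> D)"
    if x: "x \<in> {a<..<b} - C" for x
  proof -
    have x': "x \<in> {a<..<b}" using x by auto
    have eq: "L x = R x" using x LR[OF x'] by (auto simp: C_def)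
    define D where "D = R x"
    have "((\<lambda>y. (g y - g x) / (y - x)) \<longlongrightarrow> D) (at x)"
    proof (rule tendstoI)
      fix e :: real assume e: "e > 0"
      have "R x < D + e" using e by (simp add: D_def)
      then obtain u where u: "u \<in> {x<..b}" "s x u < D + e"
        unfolding R_def using cInf_less_iff[OF ne1[OF x'] bb[OF x']] by auto
      have "D - e < L x" using e eq by (simp add: D_def)
      then obtain t where t: "t \<in> {a..<x}" "D - e < s t x"
        unfolding L_def using less_cSup_iff[OF ne2[OF x'] ba[OF x']] by auto
      show "\<forall>\<^sub>F y in at x. dist ((g y - g x) / (y - x)) D < e"
        unfolding eventually_at
      proof (intro exI[of _ "min (u - x) (x - t)"] conjI ballI impI)
        show "min (u - x) (x - t) > 0" using u t by auto
        fix y assume "y \<in> UNIV" and y: "y \<noteq> x \<and> dist y x < min (u - x) (x - t)"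
        have qy: "(g y - g x) / (y - x) = s x y" by (simp add: s_def)
        show "dist ((g y - g x) / (y - x)) D < e"
        proof (cases "y > x")
          case True
          then have "y \<in> {x<..b}" "y < u" using y u by (auto simp: dist_real_def)
          then have "D \<le> s x y" "s x y \<le> s x u"
            using Rle[OF x'] m1[of x y u] x' u by (auto simp: D_def)
          then show ?thesis using u qy by (auto simp: dist_real_def)
        next
          case False
          then have "y < x" "t < y" using y t by (auto simp: dist_real_def)
          then have "s y x \<le> D" "s t x \<le> s y x"
            using Lge[OF x', of y] eq m2[of t y x] x' t by (auto simp: D_def)
          then show ?thesis using t qy sym[of x y] by (auto simp: dist_real_def)
        qed
      qed
    qed
    then have "(g has_real_derivative D) (at x)"
      by (simp add: has_field_derivative_iff)
    moreover have "\<forall>t\<in>{a..<x}. (g x - g t) / (x - t) \<le> D"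
      using Lge[OF x'] eq by (auto simp: s_def D_def)
    ultimately show ?thesis by blast
  qed
  then show ?thesis using cC by blast
qed



lemma mono_integrable_Icc:
  fixes \<psi> :: "real \<Rightarrow> real"
  assumes "mono \<psi>"
  shows "integrable lborel (\<lambda>x. \<psi> x * indicator {c..d} x)"
proof (rule integrableI_bounded_set[where A="{c..d}" and B="\<bar>\<psi> c\<bar> + \<bar>\<psi> d\<bar>"])
  have [measurable]: "\<psi> \<in> borel_measurable borel" using assms by (rule borel_measurable_mono)
  show "(\<lambda>x. \<psi> x * indicator {c..d} x) \<in> borel_measurable lborel" by measurable
  show "emeasure lborel {c..d} < \<infinity>" by (simp add: emeasure_lborel_Icc_eq)
  have "\<bar>\<psi> x\<bar> \<le> \<bar>\<psi> c\<bar> + \<bar>\<psi> d\<bar>" if "x \<in> {c..d}" for x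
    using monoD[OF assms, of c x] monoD[OF assms, of x d] that by auto
  then show "AE x in lborel. x \<in> {c..d} \<longrightarrow> norm (\<psi> x * indicator {c..d} x) \<le> \<bar>\<psi> c\<bar> + \<bar>\<psi> d\<bar>"
    by (auto split: split_indicator)
qed (auto split: split_indicator)

definition dq :: "(real \<Rightarrow> real) \<Rightarrow> real \<Rightarrow> real \<Rightarrow> nat \<Rightarrow> real \<Rightarrow> real" where
  "dq \<phi> a b n x = (real n + 1) * (\<phi> (max a (min b (x + 1 / (real n + 1)))) - \<phi> (max a (min b x)))
      * indicator {a..b} x"

lemma dq_liminf_deriv:
  assumes x: "a < x" "x < b" and D: "(\<phi> has_real_derivative D) (at x)"
  shows "liminf (\<lambda>n. ennreal (dq \<phi> a b n x)) = ennreal D"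
proof -
  have lim0: "(\<lambda>n. 1 / (real n + 1)) \<longlonglongrightarrow> (0::real)"
    using LIMSEQ_inverse_real_of_nat by (simp add: inverse_eq_divide add.commute)
  have fl: "filterlim (\<lambda>n. x + 1 / (real n + 1)) (at x) sequentially"
    unfolding filterlim_at
  proof
    show "\<forall>\<^sub>F n in sequentially. x + 1 / (real n + 1) \<in> UNIV \<and> x + 1 / (real n + 1) \<noteq> x"
      by (auto intro!: always_eventually simp: add_pos_pos)
    show "(\<lambda>n. x + 1 / (real n + 1)) \<longlonglongrightarrow> x"
      using tendsto_add[OF tendsto_const[of x] lim0] by simp
  qed
  have q: "((\<lambda>y. (\<phi> y - \<phi> x) / (y - x)) \<longlongrightarrow> D) (at x)"
    using D by (simp add: has_field_derivative_iff)
  have 1: "(\<lambda>n. (\<phi> (x + 1 / (real n + 1)) - \<phi> x) / (x + 1 / (real n + 1) - x)) \<longlonglongrightarrow> D"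
    by (rule filterlim_compose[OF q fl])
  have ev: "\<forall>\<^sub>F n in sequentially. x + 1 / (real n + 1) < b"
  proof -
    have "\<forall>\<^sub>F n in sequentially. dist (1 / (real n + 1)) 0 < b - x"
      using lim0 x by (auto simp: tendsto_iff)
    then show ?thesis by eventually_elim (auto simp: dist_real_def)
  qed
  have 2: "(\<lambda>n. dq \<phi> a b n x) \<longlonglongrightarrow> D"
  proof (rule Lim_transform_eventually[OF 1])
    show "\<forall>\<^sub>F n in sequentially. (\<phi> (x + 1 / (real n + 1)) - \<phi> x) / (x + 1 / (real n + 1) - x) = dq \<phi> a b n x"
      using ev
    proof eventually_elim
      case (elim n)
      have "0 < 1 / (real n + 1)" by simp
      then have "a \<le> x + 1 / (real n + 1)" using x by linarith
      then have "max a (min b (x + 1 / (real n + 1))) = x + 1 / (real n + 1)"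
        using elim by (simp add: max_def min_def)
      moreover have "max a (min b x) = x" using x by auto
      ultimately show ?case using x by (simp add: dq_def)
    qed
  qed
  have "(\<lambda>n. ennreal (dq \<phi> a b n x)) \<longlonglongrightarrow> ennreal D"
    using 2 by (rule tendsto_ennrealI)
  then show ?thesis by (intro lim_imp_Liminf) auto
qed

lemma dq_measurable:
  assumes "a \<le> b" "mono_on {a..b} \<phi>"
  shows "(\<lambda>x. liminf (\<lambda>n. ennreal (dq \<phi> a b n x))) \<in> borel_measurable lborel"
proof -
  define \<psi> where "\<psi> x = \<phi> (max a (min b x))" for x
  have "mono \<psi>" unfolding \<psi>_def
    by (intro monoI mono_onD[OF assms(2)]) (use assms in auto)
  then have [measurable]: "\<psi> \<in> borel_measurable borel" by (rule borel_measurable_mono)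
  have eq: "dq \<phi> a b n x = (real n + 1) * (\<psi> (x + 1 / (real n + 1)) - \<psi> x) * indicator {a..b} x" for n x
    by (simp add: dq_def \<psi>_def)
  show ?thesis unfolding eq by measurable
qed

lemma dq_bound:
  assumes ab: "a \<le> b" and mo: "mono_on {a..b} \<phi>"
  shows "(\<integral>\<^sup>+x. liminf (\<lambda>n. ennreal (dq \<phi> a b n x)) \<partial>lborel) \<le> ennreal (\<phi> b - \<phi> a)"
proof -
  define \<psi> where "\<psi> x = \<phi> (max a (min b x))" for x
  have mono: "mono \<psi>" unfolding \<psi>_def
    by (intro monoI mono_onD[OF mo]) (use ab in auto)
  then have [measurable]: "\<psi> \<in> borel_measurable borel" by (rule borel_measurable_mono)
  have eq: "dq \<phi> a b n x = (real n + 1) * (\<psi> (x + 1 / (real n + 1)) - \<psi> x) * indicator {a..b} x" for n x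
    by (simp add: dq_def \<psi>_def)
  have bnd: "(\<integral>\<^sup>+x. ennreal (dq \<phi> a b n x) \<partial>lborel) \<le> ennreal (\<phi> b - \<phi> a)" for n
  proof -
    define h where "h = 1 / (real n + 1)"
    have h: "h > 0" by (simp add: h_def)
    have monoh: "mono (\<lambda>x. \<psi> (x + h))" using mono by (auto simp: mono_def)
    have i1: "integrable lborel (\<lambda>x. \<psi> x * indicator {c..d} x)" for c d
      by (rule mono_integrable_Icc[OF mono])
    have i2: "integrable lborel (\<lambda>x. \<psi> (x + h) * indicator {c..d} x)" for c d
      by (rule mono_integrable_Icc[OF monoh])
    have nonneg: "\<psi> (x + h) - \<psi> x \<ge> 0" for x using mono h by (auto simp: mono_def)
    have feq: "(\<lambda>x. dq \<phi> a b n x) = (\<lambda>x. (real n + 1) * (\<psi> (x + h) * indicator {a..b} x - \<psi> x * indicator {a..b} x))"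
      by (auto simp: eq h_def algebra_simps)
    have int: "integrable lborel (\<lambda>x. dq \<phi> a b n x)"
      unfolding feq using i1[of a b] i2[of a b]
      by (intro integrable_mult_right Bochner_Integration.integrable_diff)
    have nneq: "(\<integral>\<^sup>+x. ennreal (dq \<phi> a b n x) \<partial>lborel) = ennreal (\<integral>x. dq \<phi> a b n x \<partial>lborel)"
      using int nonneg[unfolded h_def] by (intro nn_integral_eq_integral) (auto simp: eq intro!: AE_I2)
    have "(\<integral>x. dq \<phi> a b n x \<partial>lborel) = (real n + 1) * (\<integral>x. (\<psi> (x + h) - \<psi> x) * indicator {a..b} x \<partial>lborel)"
      unfolding eq h_def by (simp add: mult.assoc)
    also have "(\<integral>x. (\<psi> (x + h) - \<psi> x) * indicator {a..b} x \<partial>lborel)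
        \<le> (\<integral>x. (\<psi> (x + h) - \<psi> x) * indicator {a-h..b} x \<partial>lborel)"
      using i1 i2 nonneg h
      by (intro integral_mono) (auto simp: algebra_simps split: split_indicator intro!: Bochner_Integration.integrable_diff)
    also have "\<dots> = (\<integral>x. \<psi> (x + h) * indicator {a-h..b} x \<partial>lborel) - (\<integral>x. \<psi> x * indicator {a-h..b} x \<partial>lborel)"
      using Bochner_Integration.integral_diff[OF i2[of "a-h" b] i1[of "a-h" b]] by (simp add: algebra_simps)
    also have "(\<integral>x. \<psi> (x + h) * indicator {a-h..b} x \<partial>lborel) = (\<integral>x. \<psi> x * indicator {a..b+h} x \<partial>lborel)"
      using lborel_integral_real_affine[of 1 "\<lambda>x. \<psi> x * indicator {a..b+h} x" h]
      by (simp add: add.commute indicator_def diff_le_eq)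
    also have "(\<integral>x. \<psi> x * indicator {a..b+h} x \<partial>lborel) - (\<integral>x. \<psi> x * indicator {a-h..b} x \<partial>lborel)
        = (\<integral>x. \<phi> b * indicator {b<..b+h} x - \<phi> a * indicator {a-h..<a} x \<partial>lborel)"
    proof -
      have "(\<integral>x. \<psi> x * indicator {a..b+h} x \<partial>lborel) - (\<integral>x. \<psi> x * indicator {a-h..b} x \<partial>lborel)
          = (\<integral>x. \<psi> x * indicator {a..b+h} x - \<psi> x * indicator {a-h..b} x \<partial>lborel)"
        using Bochner_Integration.integral_diff[OF i1[of a "b+h"] i1[of "a-h" b]] by simp
      also have "\<dots> = (\<integral>x. \<phi> b * indicator {b<..b+h} x - \<phi> a * indicator {a-h..<a} x \<partial>lborel)"
      proof (rule Bochner_Integration.integral_cong[OF refl])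
        fix x show "\<psi> x * indicator {a..b+h} x - \<psi> x * indicator {a-h..b} x
            = \<phi> b * indicator {b<..b+h} x - \<phi> a * indicator {a-h..<a} x"
          using ab h by (auto simp: \<psi>_def indicator_def max_def min_def)
      qed
      finally show ?thesis .
    qed
    also have "\<dots> = \<phi> b * h - \<phi> a * h"
      using h by (subst Bochner_Integration.integral_diff) (auto simp: Bochner_Integration.integral_indicator)
    finally have "(\<integral>x. dq \<phi> a b n x \<partial>lborel) \<le> (real n + 1) * (\<phi> b * h - \<phi> a * h)"
      by (simp add: mult_left_mono)
    also have "(real n + 1) * (\<phi> b * h - \<phi> a * h) = \<phi> b - \<phi> a"
    proof -
      have h1: "(real n + 1) * h = 1" by (simp add: h_def)
      have "(real n + 1) * (\<phi> b * h - \<phi> a * h) = ((real n + 1) * h) * (\<phi> b - \<phi> a)"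
        by (simp add: algebra_simps)
      then show ?thesis using h1 by simp
    qed
    finally show ?thesis unfolding nneq by (rule ennreal_leI)
  qed
  have meas: "(\<lambda>x. ennreal (dq \<phi> a b n x)) \<in> borel_measurable lborel" for n
    unfolding eq by measurable
  have "(\<integral>\<^sup>+x. liminf (\<lambda>n. ennreal (dq \<phi> a b n x)) \<partial>lborel)
      \<le> liminf (\<lambda>n. \<integral>\<^sup>+x. ennreal (dq \<phi> a b n x) \<partial>lborel)"
    by (rule nn_integral_liminf[OF meas])
  also have "\<dots> \<le> ennreal (\<phi> b - \<phi> a)"
    by (intro Liminf_le) (auto intro!: always_eventually bnd)
  finally show ?thesis .
qed

lemma pointwise_ineq:
  fixes x y X Y D al be :: real
  assumes "0 \<le> X" "X \<le> x" "0 \<le> Y" "Y \<le> y" "D \<le> 0" "al > 0" "be > 0" "al + be = 1"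
  shows "exp (- (x\<^sup>2 + y\<^sup>2) / 2) * sqrt (1 + D\<^sup>2)
    \<le> (1 - D) * (al * exp (- X\<^sup>2 / (2 * al)) + be * exp (- Y\<^sup>2 / (2 * be)))"
proof -
  have s: "sqrt (1 + D\<^sup>2) \<le> 1 - D"
  proof -
    have "1 + D\<^sup>2 \<le> (1 - D)\<^sup>2" using assms by (simp add: power2_eq_square algebra_simps)
    then have "sqrt (1 + D\<^sup>2) \<le> sqrt ((1 - D)\<^sup>2)" by (rule real_sqrt_le_mono)
    then show ?thesis using assms by simp
  qed
  have e1: "exp (- (x\<^sup>2 + y\<^sup>2) / 2) \<le> exp (- (X\<^sup>2 + Y\<^sup>2) / 2)"
  proof -
    have "X\<^sup>2 \<le> x\<^sup>2" "Y\<^sup>2 \<le> y\<^sup>2" using assms by (auto intro!: power_mono)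
    then show ?thesis by simp
  qed
  have e2: "exp (- (X\<^sup>2 + Y\<^sup>2) / 2) \<le> al * exp (- X\<^sup>2 / (2 * al)) + be * exp (- Y\<^sup>2 / (2 * be))"
  proof -
    have c1: "exp ((1 - be) *\<^sub>R (- X\<^sup>2 / (2 * al)) + be *\<^sub>R (- Y\<^sup>2 / (2 * be)))
        \<le> (1 - be) * exp (- X\<^sup>2 / (2 * al)) + be * exp (- Y\<^sup>2 / (2 * be))"
      using assms by (intro convex_onD[OF exp_convex]) auto
    have c2: "(1 - be) *\<^sub>R (- X\<^sup>2 / (2 * al)) + be *\<^sub>R (- Y\<^sup>2 / (2 * be)) = - (X\<^sup>2 + Y\<^sup>2) / 2"
    proof -
      have beq: "1 - be = al" using assms by simp
      show ?thesis unfolding beq using assms(6,7) by (simp add: field_simps)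
    qed
    have c3: "1 - be = al" using assms by simp
    show ?thesis using c1[unfolded c2] unfolding c3 .
  qed
  have "exp (- (x\<^sup>2 + y\<^sup>2) / 2) * sqrt (1 + D\<^sup>2) \<le> exp (- (X\<^sup>2 + Y\<^sup>2) / 2) * (1 - D)"
    using e1 s by (intro mult_mono) auto
  also have "\<dots> \<le> (al * exp (- X\<^sup>2 / (2 * al)) + be * exp (- Y\<^sup>2 / (2 * be))) * (1 - D)"
    using e2 assms by (intro mult_right_mono) auto
  finally show ?thesis by (simp add: mult.commute)
qed

theorem mainTheorem13:
  fixes f :: "real \<Rightarrow> real" and b :: real
  assumes "b > 0"
    and "concave_on {0..b} f"
    and "\<forall>x\<in>{0..b}. f x \<ge> 0"
    and "f b = 0"
    and "f 0 > 0"
    and "\<forall>x\<in>{0..b}. f x \<le> f 0"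
  shows "(\<integral>\<^sup>+ x \<in> {0..b}. ennreal (exp (- (x\<^sup>2 + (f x)\<^sup>2) / 2) * sqrt (1 + (deriv f x)\<^sup>2)) \<partial>lborel)
           \<le> ennreal (sqrt pi)"
proof -
  note bpos = assms(1) and cc = assms(2) and fnn = assms(3) and fb = assms(4) and f0 = assms(5)
    and fmax = assms(6)
  define a where "a = f 0"
  have apos: "a > 0" using f0 by (simp add: a_def)
  define al where "al = b / (a + b)"
  define be where "be = a / (a + b)"
  have alpos: "al > 0" and bepos: "be > 0"
    using apos bpos by (auto simp: al_def be_def)
  have albe: "al + be = 1"
  proof -
    have "al + be = (b + a) / (a + b)" by (simp add: al_def be_def add_divide_distrib)
    then show ?thesis using apos bpos by simp
  qed
  define sa where "sa = sqrt (2 * al)"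
  define sb where "sb = sqrt (2 * be)"
  have sapos: "sa > 0" and sbpos: "sb > 0" using alpos bepos by (auto simp: sa_def sb_def)
  have sa2: "sa\<^sup>2 = 2 * al" and sb2: "sb\<^sup>2 = 2 * be" using alpos bepos by (auto simp: sa_def sb_def)
  have chord: "a * b - a * x \<le> b * f x" if x: "x \<in> {0..b}" for x
  proof -
    have "f ((1 - x / b) *\<^sub>R 0 + (x / b) *\<^sub>R b) \<ge> (1 - x / b) * f 0 + (x / b) * f b"
      using x bpos by (intro concave_onD[OF cc]) (auto simp: field_simps)
    moreover have "(1 - x / b) *\<^sub>R 0 + (x / b) *\<^sub>R b = x" using bpos by simp
    ultimately have "f x \<ge> (1 - x / b) * a" using fb by (simp add: a_def)
    then have "b * f x \<ge> b * ((1 - x / b) * a)" using bpos by (intro mult_left_mono) auto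
    also have "b * ((1 - x / b) * a) = a * b - a * x" using bpos by (simp add: field_simps)
    finally show ?thesis .
  qed
  have fmono: "f y \<le> f x" if "0 \<le> x" "x \<le> y" "y \<le> b" for x y
  proof (cases "y = 0")
    case True then show ?thesis using that by simp
  next
    case False
    then have ypos: "y > 0" using that by simp
    have "f ((1 - x / y) *\<^sub>R 0 + (x / y) *\<^sub>R y) \<ge> (1 - x / y) * f 0 + (x / y) * f y"
      using that ypos by (intro concave_onD[OF cc]) (auto simp: field_simps)
    moreover have "(1 - x / y) *\<^sub>R 0 + (x / y) *\<^sub>R y = x" using ypos by simp
    moreover have "f 0 \<ge> f y" using fmax that by auto
    moreover have "0 \<le> 1 - x / y" using that ypos by (simp add: field_simps)
    ultimately have "f x \<ge> (1 - x / y) * f y + (x / y) * f y"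
      by (smt (verit, best) mult_left_mono)
    then show ?thesis by (simp add: algebra_simps)
  qed
  have cvx: "convex_on {0..b} (\<lambda>x. - f x)" using cc by (simp add: concave_on_def)
  obtain C where cC: "countable C" and dC: "\<forall>x\<in>{0<..<b} - C. \<exists>D. ((\<lambda>x. - f x) has_real_derivative D) (at x) \<and>
            (\<forall>t\<in>{0..<x}. ((- f x) - (- f t)) / (x - t) \<le> D)"
    using convex_diff_countable[OF cvx] by blast
  have fder: "(f has_real_derivative deriv f x) (at x) \<and> deriv f x \<le> 0" if x: "x \<in> {0<..<b} - C" for x
  proof -
    obtain D where D: "((\<lambda>x. - f x) has_real_derivative D) (at x)"
      and Dt: "\<forall>t\<in>{0..<x}. ((- f x) - (- f t)) / (x - t) \<le> D"
      using dC x by blast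
    have fd: "(f has_real_derivative - D) (at x)"
      using DERIV_minus[OF D] by simp
    have "((- f x) - (- f 0)) / (x - 0) \<le> D" using Dt[rule_format, of 0] x by simp
    moreover have "((- f x) - (- f 0)) / (x - 0) \<ge> 0"
      using fmax x by (auto intro!: divide_nonneg_pos)
    ultimately have "- D \<le> 0" by linarith
    moreover have "deriv f x = - D" using fd by (rule DERIV_imp_deriv)
    ultimately show ?thesis using fd by simp
  qed
  define X where "X x = b * (a + x - f x) / (a + b)" for x
  define Y where "Y x = a * (b - x + f x) / (a + b)" for x
  define \<phi>1 where "\<phi>1 x = sa * G0 (X x / sa)" for x
  define \<phi>2 where "\<phi>2 x = - (sb * G0 (Y x / sb))" for x
  have ab: "a + b > 0" using apos bpos by simp
  have fle: "f x \<le> a" if "x \<in> {0..b}" for x using fmax that by (simp add: a_def)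
  have Xnn: "X x \<ge> 0" if "x \<in> {0..b}" for x
    using fle[OF that] that apos bpos unfolding X_def by (intro divide_nonneg_pos mult_nonneg_nonneg) auto
  have Ynn: "Y x \<ge> 0" if "x \<in> {0..b}" for x
    using fnn that apos bpos unfolding Y_def by (intro divide_nonneg_pos mult_nonneg_nonneg) auto
  have Xle: "X x \<le> x" if "x \<in> {0..b}" for x
  proof -
    have "b * (a + x - f x) \<le> x * (a + b)" using chord[OF that] by (simp add: algebra_simps)
    then show ?thesis unfolding X_def using ab by (simp add: divide_le_eq)
  qed
  have Yle: "Y x \<le> f x" if "x \<in> {0..b}" for x
  proof -
    have "a * (b - x + f x) \<le> f x * (a + b)" using chord[OF that] by (simp add: algebra_simps)
    then show ?thesis unfolding Y_def using ab by (simp add: divide_le_eq)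
  qed
  have mono1: "mono_on {0..b} \<phi>1"
  proof (rule mono_onI)
    fix x y assume xy: "x \<in> {0..b}" "y \<in> {0..b}" "x \<le> y"
    have "X x \<le> X y" using fmono[of x y] xy ab bpos unfolding X_def
      by (intro divide_right_mono mult_left_mono) auto
    then have "G0 (X x / sa) \<le> G0 (X y / sa)"
      using Xnn[OF xy(1)] sapos by (intro G0_mono divide_right_mono) auto
    then show "\<phi>1 x \<le> \<phi>1 y" unfolding \<phi>1_def using sapos by (intro mult_left_mono) auto
  qed
  have mono2: "mono_on {0..b} \<phi>2"
  proof (rule mono_onI)
    fix x y assume xy: "x \<in> {0..b}" "y \<in> {0..b}" "x \<le> y"
    have "Y y \<le> Y x" using fmono[of x y] xy ab apos unfolding Y_def
      by (intro divide_right_mono mult_left_mono) auto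
    then have "G0 (Y y / sb) \<le> G0 (Y x / sb)"
      using Ynn[OF xy(2)] sbpos by (intro G0_mono divide_right_mono) auto
    then show "\<phi>2 x \<le> \<phi>2 y" unfolding \<phi>2_def using sbpos by (auto intro!: mult_left_mono)
  qed
  have deriv12: "(\<phi>1 has_real_derivative exp (- (X x)\<^sup>2 / (2 * al)) * (al * (1 - deriv f x))) (at x) \<and>
                 (\<phi>2 has_real_derivative exp (- (Y x)\<^sup>2 / (2 * be)) * (be * (1 - deriv f x))) (at x)"
    if x: "x \<in> {0<..<b} - C" for x
  proof -
    have xb: "x \<in> {0..b}" using x by auto
    have fd: "(f has_real_derivative deriv f x) (at x)" using fder[OF x] by simp
    have dX: "(X has_real_derivative b * (1 - deriv f x) / (a + b)) (at x)"
      unfolding X_def[abs_def] using ab by (auto intro!: derivative_eq_intros fd)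
    have dY: "(Y has_real_derivative a * (- 1 + deriv f x) / (a + b)) (at x)"
      unfolding Y_def[abs_def] using ab by (auto intro!: derivative_eq_intros fd)
    have Xpos: "X x > 0"
    proof -
      have "f x \<le> a" using fle[OF xb] .
      then have "a + x - f x > 0" using x by auto
      then show ?thesis unfolding X_def using bpos ab by auto
    qed
    have Ypos: "Y x > 0"
    proof -
      have "f x \<ge> 0" using fnn xb by auto
      then have "b - x + f x > 0" using x by auto
      then show ?thesis unfolding Y_def using apos ab by auto
    qed
    have dG1: "(G0 has_real_derivative exp (- (X x / sa)\<^sup>2)) (at (X x / sa))"
      using Xpos sapos by (intro G0_deriv) auto
    have dG2: "(G0 has_real_derivative exp (- (Y x / sb)\<^sup>2)) (at (Y x / sb))"
      using Ypos sbpos by (intro G0_deriv) auto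
    have d1: "(\<phi>1 has_real_derivative sa * (exp (- (X x / sa)\<^sup>2) * (b * (1 - deriv f x) / (a + b) / sa))) (at x)"
      unfolding \<phi>1_def[abs_def]
      by (intro DERIV_cmult DERIV_chain2[of G0 _ "\<lambda>x. X x / sa", OF dG1] DERIV_cdivide dX)
    have d2: "(\<phi>2 has_real_derivative - (sb * (exp (- (Y x / sb)\<^sup>2) * (a * (- 1 + deriv f x) / (a + b) / sb)))) (at x)"
      unfolding \<phi>2_def[abs_def]
      by (intro DERIV_minus DERIV_cmult DERIV_chain2[of G0 _ "\<lambda>x. Y x / sb", OF dG2] DERIV_cdivide dY)
    have e1: "sa * (exp (- (X x / sa)\<^sup>2) * (b * (1 - deriv f x) / (a + b) / sa))
        = exp (- (X x)\<^sup>2 / (2 * al)) * (al * (1 - deriv f x))"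
    proof -
      have q: "(X x / sa)\<^sup>2 = (X x)\<^sup>2 / (2 * al)" using sa2 by (simp add: power_divide)
      have h1: "b * (1 - deriv f x) / (a + b) = al * (1 - deriv f x)" by (simp add: al_def)
      show ?thesis unfolding h1 q using sapos by simp
    qed
    have e2: "- (sb * (exp (- (Y x / sb)\<^sup>2) * (a * (- 1 + deriv f x) / (a + b) / sb)))
        = exp (- (Y x)\<^sup>2 / (2 * be)) * (be * (1 - deriv f x))"
    proof -
      have q: "(Y x / sb)\<^sup>2 = (Y x)\<^sup>2 / (2 * be)" using sb2 by (simp add: power_divide)
      have h2: "a * (- 1 + deriv f x) / (a + b) = - (be * (1 - deriv f x))"
      proof -
        have "a * (- 1 + deriv f x) = - (a * (1 - deriv f x))" by (simp add: algebra_simps)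
        then show ?thesis by (simp add: be_def)
      qed
      show ?thesis unfolding h2 q using sbpos by simp
    qed
    show ?thesis using d1 d2 e1 e2 by simp
  qed
  define Q1 where "Q1 x = liminf (\<lambda>n. ennreal (dq \<phi>1 0 b n x))" for x
  define Q2 where "Q2 x = liminf (\<lambda>n. ennreal (dq \<phi>2 0 b n x))" for x
  have AEb: "AE x in lborel. x \<notin> C \<union> {0, b}"
    using cC by (intro AE_not_in countable_imp_null_set_lborel) auto
  have pw: "ennreal (exp (- (x\<^sup>2 + (f x)\<^sup>2) / 2) * sqrt (1 + (deriv f x)\<^sup>2)) * indicator {0..b} x
      \<le> Q1 x + Q2 x" if x: "x \<notin> C \<union> {0, b}" for x
  proof (cases "x \<in> {0..b}")
    case False then show ?thesis by simp
  next
    case True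
    then have x': "x \<in> {0<..<b} - C" using x by auto
    have q1: "Q1 x = ennreal (exp (- (X x)\<^sup>2 / (2 * al)) * (al * (1 - deriv f x)))"
      unfolding Q1_def using x' deriv12[OF x'] by (intro dq_liminf_deriv) auto
    have q2: "Q2 x = ennreal (exp (- (Y x)\<^sup>2 / (2 * be)) * (be * (1 - deriv f x)))"
      unfolding Q2_def using x' deriv12[OF x'] by (intro dq_liminf_deriv) auto
    have dn: "deriv f x \<le> 0" using fder[OF x'] by simp
    have "exp (- (x\<^sup>2 + (f x)\<^sup>2) / 2) * sqrt (1 + (deriv f x)\<^sup>2)
        \<le> (1 - deriv f x) * (al * exp (- (X x)\<^sup>2 / (2 * al)) + be * exp (- (Y x)\<^sup>2 / (2 * be)))"
      using Xnn[OF True] Xle[OF True] Ynn[OF True] Yle[OF True] dn alpos bepos albe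
      by (intro pointwise_ineq) auto
    also have "\<dots> = exp (- (X x)\<^sup>2 / (2 * al)) * (al * (1 - deriv f x)) + exp (- (Y x)\<^sup>2 / (2 * be)) * (be * (1 - deriv f x))"
      by (simp add: algebra_simps)
    finally have "ennreal (exp (- (x\<^sup>2 + (f x)\<^sup>2) / 2) * sqrt (1 + (deriv f x)\<^sup>2))
        \<le> ennreal (exp (- (X x)\<^sup>2 / (2 * al)) * (al * (1 - deriv f x)) + exp (- (Y x)\<^sup>2 / (2 * be)) * (be * (1 - deriv f x)))"
      by (rule ennreal_leI)
    also have "\<dots> = Q1 x + Q2 x"
      unfolding q1 q2 using alpos bepos dn by (intro ennreal_plus) auto
    finally show ?thesis using True by simp
  qed
  have "(\<integral>\<^sup>+ x \<in> {0..b}. ennreal (exp (- (x\<^sup>2 + (f x)\<^sup>2) / 2) * sqrt (1 + (deriv f x)\<^sup>2)) \<partial>lborel)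
      \<le> (\<integral>\<^sup>+ x. Q1 x + Q2 x \<partial>lborel)"
  proof (rule nn_integral_mono_AE)
    show "AE x in lborel. ennreal (exp (- (x\<^sup>2 + (f x)\<^sup>2) / 2) * sqrt (1 + (deriv f x)\<^sup>2)) * indicator {0..b} x
      \<le> Q1 x + Q2 x"
      using AEb by eventually_elim (rule pw)
  qed
  also have "\<dots> = (\<integral>\<^sup>+ x. Q1 x \<partial>lborel) + (\<integral>\<^sup>+ x. Q2 x \<partial>lborel)"
    unfolding Q1_def Q2_def using bpos
    by (intro nn_integral_add dq_measurable mono1 mono2) auto
  also have "\<dots> \<le> ennreal (\<phi>1 b - \<phi>1 0) + ennreal (\<phi>2 b - \<phi>2 0)"
    unfolding Q1_def Q2_def using bpos
    by (intro add_mono dq_bound mono1 mono2) auto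
  also have "\<dots> \<le> ennreal (sqrt pi)"
  proof -
    have fa: "f 0 = a" by (simp add: a_def)
    have X0: "X 0 = 0" by (simp add: X_def fa)
    have Xb: "X b = b" using ab by (simp add: X_def fb)
    have Y0: "Y 0 = a" using ab by (simp add: Y_def fa add.commute)
    have Yb: "Y b = 0" by (simp add: Y_def fb)
    have g1: "G0 (b / sa) \<le> sqrt pi / 2" by (rule G0_bound) (use sapos bpos in simp)
    have g2: "G0 (a / sb) \<le> sqrt pi / 2" by (rule G0_bound) (use sbpos apos in simp)
    have v1: "\<phi>1 b - \<phi>1 0 \<le> sa * (sqrt pi / 2)"
      using mult_left_mono[OF g1, of sa] sapos by (simp add: \<phi>1_def X0 Xb G0_0)
    have v2: "\<phi>2 b - \<phi>2 0 \<le> sb * (sqrt pi / 2)"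
      using mult_left_mono[OF g2, of sb] sbpos by (simp add: \<phi>2_def Y0 Yb G0_0)
    have n1: "\<phi>1 b - \<phi>1 0 \<ge> 0" using mono_onD[OF mono1, of 0 b] bpos by simp
    have n2: "\<phi>2 b - \<phi>2 0 \<ge> 0" using mono_onD[OF mono2, of 0 b] bpos by simp
    have ssum: "sa + sb \<le> 2"
    proof -
      have "(sa + sb)\<^sup>2 \<le> 2\<^sup>2"
      proof -
        have m: "2 * sa * sb \<le> sa\<^sup>2 + sb\<^sup>2" by (rule sum_squares_bound)
        have s22: "sa\<^sup>2 + sb\<^sup>2 = 2" using sa2 sb2 albe by linarith
        have "(sa + sb)\<^sup>2 = sa\<^sup>2 + sb\<^sup>2 + 2 * sa * sb" by (rule power2_sum)
        also have "\<dots> \<le> 4" using m s22 by linarith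
        finally show ?thesis by (simp add: power2_eq_square)
      qed
      then show ?thesis by (rule power2_le_imp_le) simp
    qed
    have "(\<phi>1 b - \<phi>1 0) + (\<phi>2 b - \<phi>2 0) \<le> (sa + sb) * (sqrt pi / 2)"
      using v1 v2 by (simp add: algebra_simps)
    also have "\<dots> \<le> 2 * (sqrt pi / 2)" using ssum by (intro mult_right_mono) auto
    finally have "(\<phi>1 b - \<phi>1 0) + (\<phi>2 b - \<phi>2 0) \<le> sqrt pi" by simp
    then have le: "ennreal ((\<phi>1 b - \<phi>1 0) + (\<phi>2 b - \<phi>2 0)) \<le> ennreal (sqrt pi)" by (rule ennreal_leI)
    have eqp: "ennreal (\<phi>1 b - \<phi>1 0) + ennreal (\<phi>2 b - \<phi>2 0) = ennreal ((\<phi>1 b - \<phi>1 0) + (\<phi>2 b - \<phi>2 0))"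
      using n1 n2 by (rule ennreal_plus[symmetric])
    show ?thesis unfolding eqp by (rule le)
  qed
  finally show ?thesis .
qed

end
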